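(* Let $T_{ab}$ be a rank-2 tensor with symmetric part $S_{ab}=T_{(ab)}$ and antisymmetric part $F_{ab}=T_{[ab]}$. Then there is a real $f$ with $$S_{ac}S_b{}^c+F_{ac}F_b{}^c=fg_{ab},\qquad S_{ac}F_b{}^c+S_{bc}F_a{}^c=0$$ if and only if $T_a{}^b$ defines a null-cone bi-preserving map. Furthermore, in that case $S_{ab}\in\mathcal{DP}\cup-\mathcal{DP}$.
   Context: Lorentzian metric $g_{ab}$ of signature $(+,-,\dots,-)$, dimension $N\ge3$, with time orientation. $T_a{}^b$ is null-cone bi-preserving if both $k^aT_a{}^b$ and $T_a{}^bk_b$ are null or zero for every null $k$ (null: $k\ne0$, $k\cdot k=0$). $\mathcal{DP}$: rank-2 tensors $X$ with $X_{ab}u^av^b\ge0$ for all causal future-pointing $u,v$; $-\mathcal{DP}$ their negatives. *)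

theory Defs
  imports "HOL-Analysis.Analysis"
begin

text \<open>Tensors are matrices over the finite index type 'n (dimension N = CARD('n)).
  A rank-2 covariant tensor X_ab is X $ a $ b; the metric g_ab is a matrix G,
  and g^ab is its inverse matrix.\<close>

definition lorentzian_metric :: "real^'n^'n \<Rightarrow> bool" where
  "lorentzian_metric G \<longleftrightarrow> transpose G = G \<and>
     (\<exists>(P::real^'n^'n) i0. invertible P \<and>
        transpose P ** G ** P = (\<chi> i j. if i = j then (if i = i0 then 1 else -1) else 0))"

definition gform :: "real^'n^'n \<Rightarrow> real^'n \<Rightarrow> real^'n \<Rightarrow> real" where
  "gform G u v = u \<bullet> (G *v v)"

definition ginv :: "real^'n^'n \<Rightarrow> real^'n^'n" where
  "ginv G = matrix_inv G"

definition null_vec :: "real^'n^'n \<Rightarrow> real^'n \<Rightarrow> bool" where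
  "null_vec G k \<longleftrightarrow> k \<noteq> 0 \<and> gform G k k = 0"

definition null_or_zero_vec :: "real^'n^'n \<Rightarrow> real^'n \<Rightarrow> bool" where
  "null_or_zero_vec G v \<longleftrightarrow> v = 0 \<or> null_vec G v"

definition null_or_zero_cov :: "real^'n^'n \<Rightarrow> real^'n \<Rightarrow> bool" where
  "null_or_zero_cov G w \<longleftrightarrow> w = 0 \<or> null_vec (ginv G) w"

text \<open>mixed tensor T_a^b = T_ac g^cb\<close>
definition mixed :: "real^'n^'n \<Rightarrow> real^'n^'n \<Rightarrow> real^'n^'n" where
  "mixed G T = T ** ginv G"

text \<open>k^a T_a^b is  k v* mixed G T ;  T_a^b k_b with k_b = g_bc k^c is  mixed G T *v (G *v k)\<close>
definition null_cone_bipreserving :: "real^'n^'n \<Rightarrow> real^'n^'n \<Rightarrow> bool" where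
  "null_cone_bipreserving G T \<longleftrightarrow>
     (\<forall>k. null_vec G k \<longrightarrow>
        null_or_zero_vec G (k v* mixed G T) \<and> null_or_zero_cov G (mixed G T *v (G *v k)))"

text \<open>Time orientation given by a timelike vector tau; future-pointing causal vectors\<close>
definition future_causal :: "real^'n^'n \<Rightarrow> real^'n \<Rightarrow> real^'n \<Rightarrow> bool" where
  "future_causal G tau u \<longleftrightarrow> u \<noteq> 0 \<and> gform G u u \<ge> 0 \<and> gform G tau u > 0"

definition DP :: "real^'n^'n \<Rightarrow> real^'n \<Rightarrow> real^'n^'n \<Rightarrow> bool" where
  "DP G tau X \<longleftrightarrow>
     (\<forall>u v. future_causal G tau u \<and> future_causal G tau v \<longrightarrow> u \<bullet> (X *v v) \<ge> 0)"

definition sym_part :: "real^'n^'n \<Rightarrow> real^'n^'n" where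
  "sym_part T = (1/2) *\<^sub>R (T + transpose T)"

definition antisym_part :: "real^'n^'n \<Rightarrow> real^'n^'n" where
  "antisym_part T = (1/2) *\<^sub>R (T - transpose T)"

end

theory Submission
  imports Defs
begin


definition eta :: "'n \<Rightarrow> real^'n^'n" where
  "eta i0 = (\<chi> i j. if i = j then (if i = i0 then 1 else -1) else 0)"

definition sp :: "'n \<Rightarrow> real^'n \<Rightarrow> real^'n" where
  "sp i0 x = (\<chi> i. if i = i0 then 0 else x$i)"

definition Bf :: "'n \<Rightarrow> real^'n \<Rightarrow> real^'n \<Rightarrow> real" where
  "Bf i0 x y = x$i0 * y$i0 - sp i0 x \<bullet> sp i0 y"

lemma eta_vec: "eta i0 *v y = (\<chi> i. if i = i0 then y$i else - y$i)"
proof -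
  have "\<And>i. (\<Sum>j\<in>UNIV. (if i = j then (if i = i0 then 1 else -1) else 0) * y$j) = (if i = i0 then y$i else - y$i)"
  proof -
    fix i
    have "(\<Sum>j\<in>UNIV. (if i = j then (if i = i0 then 1 else -1) else 0) * y$j) = (\<Sum>j\<in>UNIV. if i = j then (if i = i0 then 1 else -1) * y$j else 0)"
      by (rule sum.cong) auto
    also have "\<dots> = (if i = i0 then 1 else -1) * y$i" by (simp add: sum.delta)
    finally show "?thesis i" by simp
  qed
  then show ?thesis by (simp add: eta_def matrix_vector_mult_def vec_eq_iff)
qed

lemma Bf_eq: "x \<bullet> (eta i0 *v y) = Bf i0 x y"
proof -
  have "x \<bullet> (eta i0 *v y) = (\<Sum>i\<in>UNIV. x$i * (if i = i0 then y$i else - y$i))"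
    by (simp add: eta_vec inner_vec_def)
  also have "\<dots> = x$i0 * y$i0 + (\<Sum>i\<in>UNIV-{i0}. x$i * (if i = i0 then y$i else - y$i))"
    by (simp add: sum.remove[of UNIV i0])
  also have "(\<Sum>i\<in>UNIV-{i0}. x$i * (if i = i0 then y$i else - y$i)) = - (\<Sum>i\<in>UNIV-{i0}. x$i * y$i)"
    by (simp add: sum_negf[symmetric])
  finally have h1: "x \<bullet> (eta i0 *v y) = x$i0 * y$i0 - (\<Sum>i\<in>UNIV-{i0}. x$i * y$i)" by simp
  have "sp i0 x \<bullet> sp i0 y = (\<Sum>i\<in>UNIV. (if i = i0 then 0 else x$i) * (if i = i0 then 0 else y$i))"
    by (simp add: sp_def inner_vec_def)
  also have "\<dots> = (\<Sum>i\<in>UNIV-{i0}. (if i = i0 then 0 else x$i) * (if i = i0 then 0 else y$i))"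
    by (simp add: sum.remove[of UNIV i0])
  also have "\<dots> = (\<Sum>i\<in>UNIV-{i0}. x$i * y$i)"
    by (rule sum.cong) auto
  finally show ?thesis using h1 by (simp add: Bf_def)
qed

lemma eta_eta: "eta i0 ** eta i0 = mat 1"
  by (simp add: matrix_eq matrix_vector_mul_assoc[symmetric] eta_vec vec_eq_iff)

lemma eta_T: "transpose (eta i0) = eta i0"
  by (simp add: eta_def transpose_def vec_eq_iff)

lemma inv_unique:
  fixes A B C :: "real^'n^'n"
  assumes "A ** B = mat 1" "C ** A = mat 1" shows "B = C"
  by (metis assms matrix_mul_assoc matrix_mul_lid matrix_mul_rid)

lemma matrix_inv_props:
  fixes A :: "real^'n^'n"
  assumes "invertible A"
  shows "A ** matrix_inv A = mat 1" "matrix_inv A ** A = mat 1"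
  using assms unfolding invertible_def matrix_inv_def by (metis (mono_tags, lifting) someI)+

lemma Bf_bil: "Bf i0 x y = x \<bullet> (eta i0 *v y)" by (simp add: Bf_eq)

lemma Bf_add_left: "Bf i0 (x + y) z = Bf i0 x z + Bf i0 y z"
  by (simp add: Bf_bil inner_add_left)
lemma Bf_add_right: "Bf i0 z (x + y) = Bf i0 z x + Bf i0 z y"
  by (simp add: Bf_bil inner_add_right matrix_vector_right_distrib)
lemma Bf_diff_left: "Bf i0 (x - y) z = Bf i0 x z - Bf i0 y z"
  by (simp add: Bf_bil inner_diff_left)
lemma Bf_diff_right: "Bf i0 z (x - y) = Bf i0 z x - Bf i0 z y"
  by (simp add: Bf_bil inner_diff_right matrix_vector_mult_diff_distrib)
lemma Bf_scale_left: "Bf i0 (a *\<^sub>R x) z = a * Bf i0 x z"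
  by (simp add: Bf_bil)
lemma Bf_scale_right: "Bf i0 z (a *\<^sub>R x) = a * Bf i0 z x"
  by (simp add: Bf_bil matrix_vector_mult_scaleR)
lemma Bf_sym: "Bf i0 x y = Bf i0 y x"
  by (simp add: Bf_def inner_commute mult.commute)

lemmas Bf_lin = Bf_add_left Bf_add_right Bf_diff_left Bf_diff_right Bf_scale_left Bf_scale_right

lemma Bf_self: "Bf i0 x x = (x$i0)^2 - sp i0 x \<bullet> sp i0 x"
  by (simp add: Bf_def power2_eq_square)

lemma sp_zero: assumes "sp i0 x = 0" "x$i0 = 0" shows "x = 0"
  unfolding vec_eq_iff
proof
  fix i
  have "(sp i0 x)$i = 0" using assms(1) by simp
  then show "x$i = 0$i" using assms(2) by (cases "i = i0") (auto simp: sp_def)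
qed

lemma Bf_self_le: "x$i0 = 0 \<Longrightarrow> Bf i0 x x \<le> 0"
  by (simp add: Bf_self)

lemma Bf_self_zero: "x$i0 = 0 \<Longrightarrow> Bf i0 x x = 0 \<Longrightarrow> x = 0"
  using sp_zero[of i0 x] by (simp add: Bf_self)

lemma causal_0: assumes "Bf i0 y y \<ge> 0" "y \<noteq> 0" shows "y$i0 \<noteq> 0"
proof
  assume h: "y$i0 = 0"
  then have "sp i0 y \<bullet> sp i0 y \<le> 0" using assms(1) by (simp add: Bf_self)
  then have "sp i0 y = 0" by (metis inner_eq_zero_iff inner_ge_zero order_antisym)
  then show False using sp_zero[of i0 y] h assms(2) by simp
qed

lemma BL2:
  assumes "Bf i0 y y \<ge> 0" "y \<noteq> 0" "Bf i0 t t > 0"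
  shows "Bf i0 t y \<noteq> 0"
proof
  assume h: "Bf i0 t y = 0"
  define a where "a = (t$i0)^2"
  define A where "A = sp i0 t \<bullet> sp i0 t"
  define b where "b = (y$i0)^2"
  define B where "B = sp i0 y \<bullet> sp i0 y"
  have aA: "A < a" using assms(3) by (simp add: Bf_self a_def A_def)
  have bB: "B \<le> b" using assms(1) by (simp add: Bf_self b_def B_def)
  have b0: "b > 0" using causal_0[OF assms(1,2)] by (simp add: b_def)
  have A0: "A \<ge> 0" by (simp add: A_def)
  have "(t$i0 * y$i0)^2 = (sp i0 t \<bullet> sp i0 y)^2" using h by (simp add: Bf_def)
  also have "\<dots> \<le> A * B" using Cauchy_Schwarz_ineq by (simp add: A_def B_def)
  also have "\<dots> \<le> A * b" using A0 bB by (simp add: mult_left_mono)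
  also have "\<dots> < a * b" using aA b0 by (simp add: mult_strict_right_mono)
  finally show False by (simp add: a_def b_def power_mult_distrib)
qed

lemma BL1_aux:
  assumes "Bf i0 x x \<ge> 0" "Bf i0 t t > 0" "Bf i0 t x > 0"
  shows "t$i0 * x$i0 > 0"
proof (rule ccontr)
  assume "\<not> ?thesis"
  then have n: "t$i0 * x$i0 \<le> 0" by simp
  have lt: "sp i0 t \<bullet> sp i0 x < t$i0 * x$i0" using assms(3) by (simp add: Bf_def)
  define A where "A = sp i0 t \<bullet> sp i0 t"
  define X where "X = sp i0 x \<bullet> sp i0 x"
  have aA: "A < (t$i0)^2" using assms(2) by (simp add: Bf_self A_def)
  have xX: "X \<le> (x$i0)^2" using assms(1) by (simp add: Bf_self X_def)
  have "(t$i0 * x$i0)^2 < (sp i0 t \<bullet> sp i0 x)^2"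
  proof -
    have "(- (t$i0 * x$i0))^2 < (- (sp i0 t \<bullet> sp i0 x))^2"
      using lt n by (intro power_strict_mono) auto
    then show ?thesis by simp
  qed
  also have "\<dots> \<le> A * X" using Cauchy_Schwarz_ineq by (simp add: A_def X_def)
  also have "\<dots> \<le> (t$i0)^2 * X" using aA by (simp add: X_def mult_right_mono)
  also have "\<dots> \<le> (t$i0)^2 * (x$i0)^2" using xX by (simp add: mult_left_mono)
  finally show False by (simp add: power_mult_distrib)
qed

lemma BL1:
  assumes "Bf i0 x x \<ge> 0" "Bf i0 y y \<ge> 0" "Bf i0 t t > 0" "Bf i0 t x > 0" "Bf i0 t y > 0"
  shows "Bf i0 x y \<ge> 0"
proof -
  have 1: "t$i0 * x$i0 > 0" using BL1_aux[OF assms(1,3,4)] .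
  have 2: "t$i0 * y$i0 > 0" using BL1_aux[OF assms(2,3,5)] .
  have e: "(t$i0 * x$i0) * (t$i0 * y$i0) = (t$i0)^2 * (x$i0 * y$i0)" by (simp add: power2_eq_square mult_ac)
  have "(t$i0)^2 * (x$i0 * y$i0) > 0" using 1 2 e by (metis mult_pos_pos)
  then have p: "x$i0 * y$i0 > 0" by (simp add: zero_less_mult_iff)
  have "(sp i0 x \<bullet> sp i0 y)^2 \<le> (sp i0 x \<bullet> sp i0 x) * (sp i0 y \<bullet> sp i0 y)"
    by (rule Cauchy_Schwarz_ineq)
  also have "\<dots> \<le> (x$i0)^2 * (y$i0)^2"
  proof (rule mult_mono)
    show "sp i0 x \<bullet> sp i0 x \<le> (x$i0)^2" using assms(1) by (simp add: Bf_self)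
    show "sp i0 y \<bullet> sp i0 y \<le> (y$i0)^2" using assms(2) by (simp add: Bf_self)
  qed auto
  finally have sq: "(sp i0 x \<bullet> sp i0 y)^2 \<le> (x$i0 * y$i0)^2" by (simp add: power_mult_distrib)
  have "sp i0 x \<bullet> sp i0 y \<le> x$i0 * y$i0"
    by (rule power2_le_imp_le[OF sq]) (use p in simp)
  then show ?thesis by (simp add: Bf_def)
qed

lemma BTN:
  assumes "Bf i0 x x = 0" "Bf i0 y y = 0" "Bf i0 x y = 0" "y \<noteq> 0"
  shows "\<exists>s. x = s *\<^sub>R y"
proof -
  define z where "z = (y$i0) *\<^sub>R x - (x$i0) *\<^sub>R y"
  have z0: "z$i0 = 0" by (simp add: z_def)
  have "Bf i0 z z = 0"
    using assms(1,2,3) by (simp add: z_def Bf_lin Bf_sym[of i0 y x])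
  then have "z = 0" using Bf_self_zero z0 by blast
  moreover have "y$i0 \<noteq> 0" using causal_0[of i0 y] assms by simp
  ultimately have "x = (x$i0 / y$i0) *\<^sub>R y"
  proof -
    assume z: "z = 0" and y0: "y$i0 \<noteq> 0"
    have e: "(y$i0) *\<^sub>R x = (x$i0) *\<^sub>R y" using z by (simp add: z_def)
    have "x = (1 / y$i0) *\<^sub>R ((y$i0) *\<^sub>R x)" using y0 by simp
    also have "\<dots> = (x$i0 / y$i0) *\<^sub>R y" by (simp only: e scaleR_scaleR) simp
    finally show ?thesis .
  qed
  then show ?thesis by blast
qed



lemma q_axis: "axis p 1 \<bullet> ((M::real^'n^'n) *v axis q 1) = M$p$q"
  by (simp add: inner_axis' matrix_vector_mul_component inner_axis)

lemma qlin:
  fixes M :: "real^'n^'n"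
  shows "(x + y) \<bullet> (M *v z) = x \<bullet> (M *v z) + y \<bullet> (M *v z)"
    "z \<bullet> (M *v (x + y)) = z \<bullet> (M *v x) + z \<bullet> (M *v y)"
    "(a *\<^sub>R x) \<bullet> (M *v z) = a * (x \<bullet> (M *v z))"
    "z \<bullet> (M *v (a *\<^sub>R x)) = a * (z \<bullet> (M *v x))"
  by (simp_all add: inner_add_left inner_add_right matrix_vector_right_distrib matrix_vector_mult_scaleR)

lemma q3: "(a *\<^sub>R axis p 1 + b *\<^sub>R axis q 1 + c *\<^sub>R axis r 1) \<bullet> ((M::real^'n^'n) *v (a *\<^sub>R axis p 1 + b *\<^sub>R axis q 1 + c *\<^sub>R axis r 1))
   = a*a*M$p$p + b*b*M$q$q + c*c*M$r$r + a*b*(M$p$q + M$q$p) + a*c*(M$p$r + M$r$p) + b*c*(M$q$r + M$r$q)"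
  apply (simp only: qlin q_axis)
  apply (simp add: algebra_simps)
  done

lemma eta_entry: "eta i0 $ p $ q = (if p = q then (if p = i0 then 1 else -1) else 0)"
  by (simp add: eta_def)

lemma Bf3: "Bf i0 (a *\<^sub>R axis p 1 + b *\<^sub>R axis q 1 + c *\<^sub>R axis r 1) (a *\<^sub>R axis p 1 + b *\<^sub>R axis q 1 + c *\<^sub>R axis r 1)
   = a*a*eta i0$p$p + b*b*eta i0$q$q + c*c*eta i0$r$r + a*b*(eta i0$p$q + eta i0$q$p) + a*c*(eta i0$p$r + eta i0$r$p) + b*c*(eta i0$q$r + eta i0$r$q)"
  by (simp only: Bf_bil q3)

lemma BQF:
  fixes M :: "real^'n^'n"
  assumes nul: "\<forall>x. Bf i0 x x = 0 \<longrightarrow> x \<bullet> (M *v x) = 0" and sym: "transpose M = M"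
  shows "M = (M$i0$i0) *\<^sub>R eta i0"
proof -
  have S: "M$i$j = M$j$i" for i j
    using sym by (metis transpose_def vec_lambda_beta)
  have Z: "a*a*M$p$p + b*b*M$q$q + c*c*M$r$r + a*b*(M$p$q + M$q$p) + a*c*(M$p$r + M$r$p) + b*c*(M$q$r + M$r$q) = 0"
    if "a*a*eta i0$p$p + b*b*eta i0$q$q + c*c*eta i0$r$r + a*b*(eta i0$p$q + eta i0$q$p) + a*c*(eta i0$p$r + eta i0$r$p) + b*c*(eta i0$q$r + eta i0$r$q) = 0"
    for a b c p q r
  proof -
    have "Bf i0 (a *\<^sub>R axis p 1 + b *\<^sub>R axis q 1 + c *\<^sub>R axis r 1) (a *\<^sub>R axis p 1 + b *\<^sub>R axis q 1 + c *\<^sub>R axis r 1) = 0"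
      using that by (simp only: Bf3)
    then have "(a *\<^sub>R axis p 1 + b *\<^sub>R axis q 1 + c *\<^sub>R axis r 1) \<bullet> (M *v (a *\<^sub>R axis p 1 + b *\<^sub>R axis q 1 + c *\<^sub>R axis r 1)) = 0"
      using nul by blast
    then show ?thesis by (simp only: q3)
  qed
  have one: "M$i0$j = 0 \<and> M$j$j = - M$i0$i0" if "j \<noteq> i0" for j
  proof -
    have 1: "M$i0$i0 + M$j$j + (M$i0$j + M$j$i0) = 0"
      using Z[of 1 i0 1 j 0 j] that by (simp add: eta_entry)
    have 2: "M$i0$i0 + M$j$j - (M$i0$j + M$j$i0) = 0"
      using Z[of 1 i0 "-1" j 0 j] that by (simp add: eta_entry)
    show ?thesis using 1 2 S[of i0 j] by linarith
  qed
  have two: "M$i$j = 0" if "i \<noteq> i0" "j \<noteq> i0" "i \<noteq> j" for i j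
  proof -
    have "25*M$i0$i0 + 9*M$i$i + 16*M$j$j + 15*(M$i0$i + M$i$i0) + 20*(M$i0$j + M$j$i0) + 12*(M$i$j + M$j$i) = 0"
      using Z[of 5 i0 3 i 4 j] that by (simp add: eta_entry)
    moreover note one[OF that(1)] one[OF that(2)]
    ultimately show ?thesis using S[of i0 i] S[of i0 j] S[of i j] by (elim conjE) (simp add: algebra_simps)
  qed
  show ?thesis
    unfolding vec_eq_iff
  proof (intro allI)
    fix i j
    show "M$i$j = ((M$i0$i0) *\<^sub>R eta i0)$i$j"
      using one[of i] one[of j] two[of i j] S[of i j]
      by (cases "i = i0"; cases "j = i0"; cases "i = j") (auto simp: eta_entry)
  qed
qed

lemma two_other:
  assumes "CARD('n) \<ge> 3"
  obtains i j :: 'n where "i \<noteq> i0" "j \<noteq> i0" "i \<noteq> j"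
proof -
  have "\<exists>i::'n. i \<noteq> i0"
  proof (rule ccontr)
    assume "\<not> ?thesis"
    then have "(UNIV::'n set) \<subseteq> {i0}" by auto
    then have "CARD('n) \<le> card {i0}" by (intro card_mono) auto
    then show False using assms by simp
  qed
  then obtain i :: 'n where i: "i \<noteq> i0" by blast
  have "\<exists>j::'n. j \<noteq> i0 \<and> j \<noteq> i"
  proof (rule ccontr)
    assume "\<not> ?thesis"
    then have "(UNIV::'n set) \<subseteq> {i0, i}" by auto
    then have "CARD('n) \<le> card {i0, i}" by (intro card_mono) auto
    also have "\<dots> \<le> 2" by (simp add: card_insert_le_m1)
    finally show False using assms by simp
  qed
  then obtain j where "j \<noteq> i0" "j \<noteq> i" by blast
  then show ?thesis using that i by blast
qed

lemma BNEG:
  fixes A :: "real^'n^'n"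
  assumes "CARD('n) \<ge> 3" and h: "\<forall>x. Bf i0 (A *v x) (A *v x) = f * Bf i0 x x" and f: "f < 0"
  shows False
proof -
  obtain i j :: 'n where ij: "i \<noteq> i0" "j \<noteq> i0" "i \<noteq> j" by (rule two_other[OF assms(1), of i0])
  define b where "b = (A *v axis i (1::real))$i0"
  define a where "a = (A *v axis j (1::real))$i0"
  obtain w :: "real^'n" where w0: "(A *v w)$i0 = 0" and wn: "Bf i0 w w < 0"
  proof (cases "b = 0")
    case True
    have "Bf i0 (axis i (1::real)) (axis i (1::real)) = -1" using ij by (simp add: Bf_bil q_axis eta_entry)
    then show ?thesis using that[of "axis i (1::real)"] True by (simp add: b_def)
  next
    case False
    define w where "w = a *\<^sub>R axis i (1::real) + (-b) *\<^sub>R axis j (1::real) + 0 *\<^sub>R axis j (1::real)"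
    have e: "A *v w = a *\<^sub>R (A *v axis i (1::real)) - b *\<^sub>R (A *v axis j (1::real))"
      by (simp add: w_def matrix_vector_right_distrib matrix_vector_mult_diff_distrib matrix_vector_mult_scaleR)
    then have "(A *v w)$i0 = 0" by (simp add: a_def b_def mult.commute)
    moreover have "Bf i0 w w = - (a*a) - b*b" unfolding w_def Bf3 using ij by (simp add: eta_entry)
    moreover have "b*b > 0" using False by (cases "b > 0") (auto simp: mult_neg_neg)
    moreover have "a*a \<ge> 0" by simp
    ultimately have "Bf i0 w w < 0" by linarith
    show ?thesis by (rule that[OF \<open>(A *v w)$i0 = 0\<close> \<open>Bf i0 w w < 0\<close>])
  qed
  have "Bf i0 (A *v w) (A *v w) \<le> 0" by (rule Bf_self_le[OF w0])
  moreover have "f * Bf i0 w w > 0" using f wn by (simp add: mult_neg_neg)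
  ultimately show False using h[rule_format, of w] by simp
qed



lemma congr_form:
  fixes P :: "real^'m^'n" and Q :: "real^'n^'n"
  shows "(P *v x) \<bullet> (Q *v (P *v y)) = x \<bullet> ((transpose P ** Q ** P) *v y)"
  by (metis dot_lmul_matrix vector_transpose_matrix matrix_vector_mul_assoc)

context
  fixes G P :: "real^'n^'n" and i0 :: 'n
  assumes GS: "transpose G = G" and Pinv: "invertible P" and PGP: "transpose P ** G ** P = eta i0"
begin

lemma Pi1: "P ** matrix_inv P = mat 1" "matrix_inv P ** P = mat 1"
  using matrix_inv_props[OF Pinv] by auto

lemma Pi2: "transpose (matrix_inv P) ** transpose P = mat 1" "transpose P ** transpose (matrix_inv P) = mat 1"
  by (metis Pi1 matrix_transpose_mul transpose_mat)+

lemma canc: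
  "X ** P ** matrix_inv P = X" "X ** matrix_inv P ** P = X"
  "X ** transpose (matrix_inv P) ** transpose P = X" "X ** transpose P ** transpose (matrix_inv P) = X"
  "X ** eta i0 ** eta i0 = X"
  by (metis Pi1 Pi2 eta_eta matrix_mul_assoc matrix_mul_rid)+

lemma Pc: "P *v (matrix_inv P *v x) = x"
  by (simp add: matrix_vector_mul_assoc Pi1)

lemma cP: "matrix_inv P *v (P *v x) = x"
  by (simp add: matrix_vector_mul_assoc Pi1)

lemma gP: "gform G (P *v x) (P *v y) = Bf i0 x y"
  by (simp only: gform_def congr_form PGP Bf_eq)

lemma gform_c: "gform G x y = Bf i0 (matrix_inv P *v x) (matrix_inv P *v y)"
  using gP[of "matrix_inv P *v x" "matrix_inv P *v y"] by (simp only: Pc)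

lemma c_zero: "matrix_inv P *v x = 0 \<longleftrightarrow> x = 0"
  by (metis Pc matrix_vector_mult_0_right)

lemma G_eq: "G = transpose (matrix_inv P) ** eta i0 ** matrix_inv P"
proof -
  have "transpose (matrix_inv P) ** eta i0 ** matrix_inv P
      = transpose (matrix_inv P) ** (transpose P ** G ** P) ** matrix_inv P" by (simp only: PGP)
  also have "\<dots> = G" by (simp only: matrix_mul_assoc canc) (simp add: Pi2)
  finally show ?thesis by simp
qed

definition "Hm = P ** eta i0 ** transpose P"

lemma GH: "G ** Hm = mat 1" "Hm ** G = mat 1"
proof -
  have "G ** Hm = transpose (matrix_inv P) ** eta i0 ** matrix_inv P ** (P ** eta i0 ** transpose P)"
    by (simp only: Hm_def G_eq[symmetric])
  also have "\<dots> = mat 1" by (simp only: matrix_mul_assoc canc) (simp add: Pi2)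
  finally show "G ** Hm = mat 1" .
  have "Hm ** G = P ** eta i0 ** transpose P ** (transpose (matrix_inv P) ** eta i0 ** matrix_inv P)"
    by (simp only: Hm_def G_eq[symmetric])
  also have "\<dots> = mat 1" by (simp only: matrix_mul_assoc canc) (simp add: Pi1)
  finally show "Hm ** G = mat 1" .
qed

lemma G_invertible: "invertible G"
  unfolding invertible_def using GH by blast

lemma ginv_eq: "ginv G = Hm"
proof -
  have "G ** matrix_inv G = mat 1" using matrix_inv_props[OF G_invertible] by simp
  then show ?thesis unfolding ginv_def using inv_unique GH(2) by blast
qed

lemma ginv_props: "G ** ginv G = mat 1" "ginv G ** G = mat 1"
  using GH ginv_eq by auto

lemma ginv_sym: "transpose (ginv G) = ginv G"
  by (simp add: ginv_eq Hm_def matrix_transpose_mul eta_T matrix_mul_assoc)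

lemma GL2:
  assumes "gform G y y \<ge> 0" "y \<noteq> 0" "gform G t t > 0"
  shows "gform G t y \<noteq> 0"
  using BL2[of i0 "matrix_inv P *v y" "matrix_inv P *v t"] assms
  by (simp add: gform_c c_zero)

lemma GL1:
  assumes "gform G x x \<ge> 0" "gform G y y \<ge> 0" "gform G t t > 0" "gform G t x > 0" "gform G t y > 0"
  shows "gform G x y \<ge> 0"
  using BL1[of i0 "matrix_inv P *v x" "matrix_inv P *v y" "matrix_inv P *v t"] assms
  by (simp add: gform_c)

lemma GTN:
  assumes "gform G x x = 0" "gform G y y = 0" "gform G x y = 0" "y \<noteq> 0"
  shows "\<exists>s. x = s *\<^sub>R y"
proof -
  obtain s where "matrix_inv P *v x = s *\<^sub>R (matrix_inv P *v y)"
    using BTN[of i0 "matrix_inv P *v x" "matrix_inv P *v y"] assms by (auto simp: gform_c c_zero)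
  then have "P *v (matrix_inv P *v x) = P *v (s *\<^sub>R (matrix_inv P *v y))" by simp
  then have "x = s *\<^sub>R y" by (simp only: Pc matrix_vector_mult_scaleR)
  then show ?thesis by blast
qed

lemma GQF:
  fixes Q :: "real^'n^'n"
  assumes nul: "\<forall>k. null_vec G k \<longrightarrow> k \<bullet> (Q *v k) = 0" and sym: "transpose Q = Q"
  shows "\<exists>c. Q = c *\<^sub>R G"
proof -
  define M where "M = transpose P ** Q ** P"
  have Ms: "transpose M = M"
    by (simp add: M_def matrix_transpose_mul sym matrix_mul_assoc)
  have "\<forall>x. Bf i0 x x = 0 \<longrightarrow> x \<bullet> (M *v x) = 0"
  proof (intro allI impI)
    fix x assume h: "Bf i0 x x = 0"
    show "x \<bullet> (M *v x) = 0"
    proof (cases "x = 0")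
      case True then show ?thesis by simp
    next
      case False
      then have "P *v x \<noteq> 0" by (metis cP matrix_vector_mult_0_right)
      moreover have "gform G (P *v x) (P *v x) = 0" using h by (simp add: gP)
      ultimately have "(P *v x) \<bullet> (Q *v (P *v x)) = 0" using nul by (simp add: null_vec_def)
      then show ?thesis by (simp add: congr_form M_def)
    qed
  qed
  then have "M = (M$i0$i0) *\<^sub>R eta i0" using BQF Ms by blast
  then have "transpose (matrix_inv P) ** M ** matrix_inv P = transpose (matrix_inv P) ** ((M$i0$i0) *\<^sub>R eta i0) ** matrix_inv P"
    by simp
  moreover have "transpose (matrix_inv P) ** M ** matrix_inv P = Q"
    unfolding M_def by (simp only: matrix_mul_assoc canc) (simp add: Pi2)
  moreover have "transpose (matrix_inv P) ** ((M$i0$i0) *\<^sub>R eta i0) ** matrix_inv P = (M$i0$i0) *\<^sub>R G"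
    by (simp add: G_eq matrix_scalar_ac scalar_matrix_assoc)
  ultimately show ?thesis by metis
qed

lemma GNEG:
  fixes L :: "real^'n^'n"
  assumes "CARD('n) \<ge> 3" and h: "\<forall>x. gform G (L *v x) (L *v x) = f * gform G x x" and f: "f < 0"
  shows False
proof -
  define A where "A = matrix_inv P ** L ** P"
  have "\<forall>x. Bf i0 (A *v x) (A *v x) = f * Bf i0 x x"
  proof
    fix x
    have e: "P *v (A *v x) = L *v (P *v x)"
      by (simp add: A_def matrix_vector_mul_assoc matrix_mul_assoc Pi1)
    have "Bf i0 (A *v x) (A *v x) = gform G (P *v (A *v x)) (P *v (A *v x))" by (simp add: gP)
    also have "\<dots> = f * gform G (P *v x) (P *v x)" by (simp only: e h)
    finally show "Bf i0 (A *v x) (A *v x) = f * Bf i0 x x" by (simp add: gP)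
  qed
  then show False using BNEG[OF assms(1) _ f] by blast
qed

end


lemma matrix_add_rdistrib': "((A::real^'n^'m) + B) ** C = A ** C + B ** C"
  by (simp add: matrix_matrix_mult_def vec_eq_iff sum.distrib distrib_right)
lemma matrix_diff_rdistrib': "((A::real^'n^'m) - B) ** C = A ** C - B ** C"
  by (simp add: matrix_matrix_mult_def vec_eq_iff sum_subtractf left_diff_distrib)
lemma matrix_diff_ldistrib': "(C::real^'n^'m) ** (A - B) = C ** A - C ** B"
  by (simp add: matrix_matrix_mult_def vec_eq_iff sum_subtractf right_diff_distrib)

lemma SF_facts:
  fixes T :: "real^'n^'n"
  shows "sym_part T + antisym_part T = T"
    "sym_part T - antisym_part T = transpose T"
    "transpose (sym_part T) + transpose (antisym_part T) = transpose T"
    "transpose (sym_part T) - transpose (antisym_part T) = T"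
  by (simp_all add: sym_part_def antisym_part_def vec_eq_iff transpose_def field_simps)

lemma AB_expand:
  fixes T H :: "real^'n^'n"
  defines "S \<equiv> sym_part T" and "F \<equiv> antisym_part T"
  shows "(S ** H ** transpose S + F ** H ** transpose F) + (S ** H ** transpose F + F ** H ** transpose S) = T ** H ** transpose T"
    "(S ** H ** transpose S + F ** H ** transpose F) - (S ** H ** transpose F + F ** H ** transpose S) = transpose T ** H ** T"
proof -
  have "T ** H ** transpose T = (S + F) ** H ** (transpose S + transpose F)"
    using SF_facts[of T] by (simp add: S_def F_def)
  also have "\<dots> = (S ** H ** transpose S + F ** H ** transpose F) + (S ** H ** transpose F + F ** H ** transpose S)"
    by (simp add: matrix_add_rdistrib' matrix_add_ldistrib algebra_simps)
  finally show "(S ** H ** transpose S + F ** H ** transpose F) + (S ** H ** transpose F + F ** H ** transpose S) = T ** H ** transpose T" by simp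
  have "transpose T ** H ** T = (S - F) ** H ** (transpose S - transpose F)"
    using SF_facts[of T] by (simp add: S_def F_def)
  also have "\<dots> = (S ** H ** transpose S + F ** H ** transpose F) - (S ** H ** transpose F + F ** H ** transpose S)"
    by (simp add: matrix_diff_rdistrib' matrix_diff_ldistrib' algebra_simps)
  finally show "(S ** H ** transpose S + F ** H ** transpose F) - (S ** H ** transpose F + F ** H ** transpose S) = transpose T ** H ** T" by simp
qed



lemma trace_transpose': "trace (transpose (X::real^'n^'n)) = trace X"
  by (simp add: trace_def transpose_def)

lemma trace_scaleR': "trace (c *\<^sub>R (X::real^'n^'n)) = c * trace X"
  by (simp add: trace_def sum_distrib_left)

lemma gform_sym: "transpose G = G \<Longrightarrow> gform G x y = gform G y x"
  unfolding gform_def by (metis dot_lmul_matrix inner_commute transpose_matrix_vector)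

lemma uminus_mv: "(- (X::real^'n^'n)) *v v = - (X *v v)"
  by (simp add: matrix_vector_mult_def vec_eq_iff sum_negf)

lemma sym_form: "u \<bullet> (sym_part T *v v) = (u \<bullet> (T *v v) + v \<bullet> (T *v u)) / 2"
proof -
  have "u \<bullet> (transpose T *v v) = v \<bullet> (T *v u)"
    by (metis dot_lmul_matrix inner_commute transpose_matrix_vector)
  then show ?thesis
    by (simp add: sym_part_def scaleR_matrix_vector_assoc[symmetric] matrix_vector_mult_add_rdistrib inner_add_right)
qed

context
  fixes G P :: "real^'n^'n" and i0 :: 'n
  assumes GS: "transpose G = G" and Pinv: "invertible P" and PGP: "transpose P ** G ** P = eta i0"
begin

context fixes T :: "real^'n^'n" begin

lemma cancH: "X ** ginv G ** G = X" "X ** G ** ginv G = X"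
  by (metis ginv_props[OF GS Pinv PGP] matrix_mul_assoc matrix_mul_rid)+

lemma HsT: "transpose (ginv G) = ginv G" by (rule ginv_sym[OF GS Pinv PGP])

lemma I1: "k v* mixed G T = (ginv G ** transpose T) *v k"
  by (simp add: mixed_def matrix_transpose_mul HsT flip: transpose_matrix_vector)

lemma I2: "mixed G T *v (G *v k) = T *v k"
  by (simp add: mixed_def matrix_vector_mul_assoc cancH)

lemma I3: "gform G ((ginv G ** transpose T) *v x) ((ginv G ** transpose T) *v y) = x \<bullet> ((T ** ginv G ** transpose T) *v y)"
  unfolding gform_def congr_form
  by (simp add: matrix_transpose_mul HsT matrix_mul_assoc cancH)

lemma I4: "gform (ginv G) (T *v x) (T *v y) = x \<bullet> ((transpose T ** ginv G ** T) *v y)"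
  unfolding gform_def congr_form ..

lemma I5: "gform G ((ginv G ** T) *v x) ((ginv G ** T) *v y) = x \<bullet> ((transpose T ** ginv G ** T) *v y)"
  unfolding gform_def congr_form
  by (simp add: matrix_transpose_mul HsT matrix_mul_assoc cancH)

lemma I6: "gform G ((ginv G ** transpose T) *v u) v = u \<bullet> (T *v v)"
  unfolding gform_def
proof -
  have "((ginv G ** transpose T) *v u) \<bullet> (G *v v) = (u v* transpose (ginv G ** transpose T)) \<bullet> (G *v v)"
    by simp
  also have "\<dots> = u \<bullet> ((transpose (ginv G ** transpose T) ** G) *v v)"
    by (simp only: dot_lmul_matrix matrix_vector_mul_assoc)
  also have "transpose (ginv G ** transpose T) ** G = T"
    by (simp add: matrix_transpose_mul HsT matrix_mul_assoc[symmetric] ginv_props[OF GS Pinv PGP])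
  finally show "((ginv G ** transpose T) *v u) \<bullet> (G *v v) = u \<bullet> (T *v v)" .
qed

lemma I7: "gform G u ((ginv G ** T) *v v) = u \<bullet> (T *v v)"
  unfolding gform_def
  by (simp add: matrix_vector_mul_assoc matrix_mul_assoc ginv_props[OF GS Pinv PGP])

lemma Q1sym: "transpose (T ** ginv G ** transpose T) = T ** ginv G ** transpose T"
  by (simp add: matrix_transpose_mul HsT matrix_mul_assoc)

lemma Q2sym: "transpose (transpose T ** ginv G ** T) = transpose T ** ginv G ** T"
  by (simp add: matrix_transpose_mul HsT matrix_mul_assoc)

lemma trace_eq: "trace (ginv G ** (T ** ginv G ** transpose T)) = trace (ginv G ** (transpose T ** ginv G ** T))"
proof -
  have "trace (ginv G ** (T ** ginv G ** transpose T)) = trace (transpose (ginv G ** (T ** ginv G ** transpose T)))"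
    by (simp add: trace_transpose')
  also have "transpose (ginv G ** (T ** ginv G ** transpose T)) = T ** (ginv G ** transpose T ** ginv G)"
    by (simp add: matrix_transpose_mul HsT matrix_mul_assoc)
  also have "trace \<dots> = trace ((ginv G ** transpose T ** ginv G) ** T)" by (rule trace_mul_sym)
  also have "(ginv G ** transpose T ** ginv G) ** T = ginv G ** (transpose T ** ginv G ** T)"
    by (simp add: matrix_mul_assoc)
  finally show ?thesis .
qed

end
end


lemma gform_neg: "gform G (- x) y = - gform G x y" "gform G x (- y) = - gform G x y"
proof -
  have "G *v (- y) = - (G *v y)" by (metis diff_0 matrix_vector_mult_0_right matrix_vector_mult_diff_distrib)
  then show "gform G (- x) y = - gform G x y" "gform G x (- y) = - gform G x y"
    by (simp_all add: gform_def)
qed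

lemma gform_zero: "gform G 0 y = 0" "gform G x 0 = 0"
  by (simp_all add: gform_def)

lemma gform_scale: "gform G (s *\<^sub>R x) y = s * gform G x y"
  by (simp add: gform_def)

lemma sign_aux:
  fixes beta d a b sa sb sd :: real
  assumes "beta * d = a * b" "0 \<le> sa * a" "0 \<le> sb * b" "sd * d > 0" "sd * sd = 1"
  shows "0 \<le> (sa * sb * sd) * beta"
proof -
  have "0 \<le> (sa * a) * (sb * b)" using assms(2,3) by simp
  also have "(sa * a) * (sb * b) = sa * sb * (beta * d)" using assms(1) by (simp add: algebra_simps)
  also have "\<dots> = ((sa * sb * sd) * beta) * (sd * d)"
  proof -
    have "((sa * sb * sd) * beta) * (sd * d) = sa * sb * (beta * d) * (sd * sd)" by (simp add: mult_ac)
    then show ?thesis using assms(5) by simp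
  qed
  finally have "0 \<le> ((sa * sb * sd) * beta) * (sd * d)" .
  then show ?thesis using assms(4) by (simp add: zero_le_mult_iff)
qed

context
  fixes G P :: "real^'n^'n" and i0 :: 'n
  assumes GS: "transpose G = G" and Pinv: "invertible P" and PGP: "transpose P ** G ** P = eta i0"
begin

lemmas GL1' = GL1[OF GS Pinv PGP]
lemmas GL2' = GL2[OF GS Pinv PGP]
lemmas GTN' = GTN[OF GS Pinv PGP]
lemmas gsym = gform_sym[OF GS]

lemma SIGN:
  assumes "gform G w w = 0" "gform G t t > 0"
  shows "\<exists>s::real. (s = 1 \<or> s = -1) \<and> (\<forall>u. future_causal G t u \<longrightarrow> 0 \<le> s * gform G w u)"
proof (cases "w = 0")
  case True then show ?thesis by (auto simp: gform_zero)
next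
  case False
  then have ne: "gform G t w \<noteq> 0" using GL2'[of w t] assms by simp
  show ?thesis
  proof (cases "gform G t w > 0")
    case True
    have "\<forall>u. future_causal G t u \<longrightarrow> 0 \<le> gform G w u"
      using GL1'[of w _ t] assms True by (auto simp: future_causal_def)
    then show ?thesis by (intro exI[of _ 1]) auto
  next
    case False
    then have "gform G t (- w) > 0" using ne by (simp add: gform_neg)
    then have "\<forall>u. future_causal G t u \<longrightarrow> 0 \<le> gform G (- w) u"
      using GL1'[of "- w" _ t] assms by (auto simp: future_causal_def gform_neg)
    then show ?thesis by (intro exI[of _ "-1"]) (auto simp: gform_neg)
  qed
qed

lemma POS:
  assumes c: "c > 0" and hl: "\<forall>x y. gform G (l x) (l y) = c * gform G x y"
    and ht: "gform G t t > 0" and hp: "gform G t (l t) > 0"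
    and u: "future_causal G t u" and v: "future_causal G t v"
  shows "gform G (l u) v \<ge> 0"
proof -
  have uu: "gform G (l u) (l u) \<ge> 0" using hl u c by (simp add: future_causal_def)
  have tt: "gform G (l t) (l t) \<ge> 0" using hl ht c by simp
  have ut: "gform G (l u) (l t) > 0" using hl u c gsym[of u t] by (simp add: future_causal_def)
  have pos: "gform G t (l u) > 0"
  proof (rule ccontr)
    assume "\<not> ?thesis"
    moreover have "l u \<noteq> 0" using ut by (auto simp: gform_zero)
    ultimately have "gform G t (l u) < 0" using GL2'[OF uu _ ht] by force
    then have a: "gform G t (- l u) > 0" by (simp add: gform_neg)
    have b: "gform G (- l u) (- l u) \<ge> 0" using uu by (simp add: gform_neg)
    have "gform G (- l u) (l t) \<ge> 0" using GL1'[OF b tt ht a hp] .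
    then show False using ut by (simp add: gform_neg)
  qed
  show ?thesis using GL1'[OF uu _ ht pos] v by (simp add: future_causal_def)
qed

end


context
  fixes G P :: "real^'n^'n" and i0 :: 'n
  assumes GS: "transpose G = G" and Pinv: "invertible P" and PGP: "transpose P ** G ** P = eta i0"
begin

lemmas I1' = I1[OF GS Pinv PGP] and I2' = I2[OF GS Pinv PGP] and I3' = I3[OF GS Pinv PGP]
  and I4' = I4[OF GS Pinv PGP] and I5' = I5[OF GS Pinv PGP] and I6' = I6[OF GS Pinv PGP]
  and I7' = I7[OF GS Pinv PGP] and Q1sym' = Q1sym[OF GS Pinv PGP] and Q2sym' = Q2sym[OF GS Pinv PGP]
  and trace_eq' = trace_eq[OF GS Pinv PGP] and GQF' = GQF[OF GS Pinv PGP]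
  and ginv_props' = ginv_props[OF GS Pinv PGP]

lemma bip_Q:
  assumes "null_cone_bipreserving G T"
  shows "\<exists>c. T ** ginv G ** transpose T = c *\<^sub>R G \<and> transpose T ** ginv G ** T = c *\<^sub>R G"
proof -
  have n1: "\<forall>k. null_vec G k \<longrightarrow> k \<bullet> ((T ** ginv G ** transpose T) *v k) = 0"
  proof (intro allI impI)
    fix k assume k: "null_vec G k"
    then have "null_or_zero_vec G ((ginv G ** transpose T) *v k)"
      using assms unfolding null_cone_bipreserving_def by (simp add: I1')
    then have "gform G ((ginv G ** transpose T) *v k) ((ginv G ** transpose T) *v k) = 0"
      by (auto simp: null_or_zero_vec_def null_vec_def gform_zero)
    then show "k \<bullet> ((T ** ginv G ** transpose T) *v k) = 0" by (simp add: I3')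
  qed
  have n2: "\<forall>k. null_vec G k \<longrightarrow> k \<bullet> ((transpose T ** ginv G ** T) *v k) = 0"
  proof (intro allI impI)
    fix k assume k: "null_vec G k"
    then have "null_or_zero_cov G (T *v k)"
      using assms unfolding null_cone_bipreserving_def by (simp add: I2')
    then have "gform (ginv G) (T *v k) (T *v k) = 0"
      by (auto simp: null_or_zero_cov_def null_vec_def gform_zero)
    then show "k \<bullet> ((transpose T ** ginv G ** T) *v k) = 0" by (simp add: I4')
  qed
  obtain c1 where c1: "T ** ginv G ** transpose T = c1 *\<^sub>R G" using GQF'[OF n1 Q1sym'] by blast
  obtain c2 where c2: "transpose T ** ginv G ** T = c2 *\<^sub>R G" using GQF'[OF n2 Q2sym'] by blast
  have tr: "trace (ginv G ** (c *\<^sub>R G)) = c * of_nat CARD('n)" for c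
    by (simp add: matrix_scalar_ac scalar_matrix_assoc[symmetric] trace_scaleR' ginv_props' trace_I)
  have "c1 * of_nat CARD('n) = c2 * of_nat CARD('n)"
    using trace_eq'[of T] c1 c2 tr by simp
  then have "c1 = c2" by simp
  then show ?thesis using c1 c2 by blast
qed

lemma part1:
  "(\<exists>f::real.
      sym_part T ** ginv G ** transpose (sym_part T)
        + antisym_part T ** ginv G ** transpose (antisym_part T) = f *\<^sub>R G
    \<and> sym_part T ** ginv G ** transpose (antisym_part T)
        + antisym_part T ** ginv G ** transpose (sym_part T) = 0)
   \<longleftrightarrow> null_cone_bipreserving G T" (is "(\<exists>f. ?A = f *\<^sub>R G \<and> ?B = 0) \<longleftrightarrow> _")
proof
  have e1: "?A + ?B = T ** ginv G ** transpose T" and e2: "?A - ?B = transpose T ** ginv G ** T"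
    using AB_expand[of T "ginv G"] by simp_all
  {
    assume "\<exists>f. ?A = f *\<^sub>R G \<and> ?B = 0"
    then obtain f where A: "?A = f *\<^sub>R G" and B: "?B = 0" by blast
    have q1: "T ** ginv G ** transpose T = f *\<^sub>R G" using e1 A B by simp
    have q2: "transpose T ** ginv G ** T = f *\<^sub>R G" using e2 A B by simp
    show "null_cone_bipreserving G T"
      unfolding null_cone_bipreserving_def
    proof (intro allI impI conjI)
      fix k assume k: "null_vec G k"
      have "gform G ((ginv G ** transpose T) *v k) ((ginv G ** transpose T) *v k) = f * gform G k k"
        by (simp only: I3' q1) (simp add: scaleR_matrix_vector_assoc[symmetric] gform_def)
      then show "null_or_zero_vec G (k v* mixed G T)"
        using k by (simp add: I1' null_or_zero_vec_def null_vec_def)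
      have "gform (ginv G) (T *v k) (T *v k) = f * gform G k k"
        by (simp only: I4' q2) (simp add: scaleR_matrix_vector_assoc[symmetric] gform_def)
      then show "null_or_zero_cov G (mixed G T *v (G *v k))"
        using k by (simp add: I2' null_or_zero_cov_def null_vec_def)
    qed
  }
  assume "null_cone_bipreserving G T"
  then obtain c where c1: "T ** ginv G ** transpose T = c *\<^sub>R G" and c2: "transpose T ** ginv G ** T = c *\<^sub>R G"
    using bip_Q by blast
  have s: "?A + ?B = c *\<^sub>R G" "?A - ?B = c *\<^sub>R G" using e1 e2 c1 c2 by simp_all
  have "?A = c *\<^sub>R G \<and> ?B = 0"
  proof -
    have h: "\<forall>i j. ?A$i$j + ?B$i$j = c * G$i$j \<and> ?A$i$j - ?B$i$j = c * G$i$j"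
      using s by (simp add: vec_eq_iff)
    have "\<forall>i j. ?A$i$j = c * G$i$j \<and> ?B$i$j = 0"
    proof (intro allI)
      fix i j
      show "?A$i$j = c * G$i$j \<and> ?B$i$j = 0" using h[rule_format, of i j] by linarith
    qed
    then show ?thesis by (simp add: vec_eq_iff)
  qed
  then show "\<exists>f. ?A = f *\<^sub>R G \<and> ?B = 0" by blast
qed

end


context
  fixes G P :: "real^'n^'n" and i0 :: 'n
  assumes GS: "transpose G = G" and Pinv: "invertible P" and PGP: "transpose P ** G ** P = eta i0"
begin

lemmas I3'' = I3[OF GS Pinv PGP] and I5'' = I5[OF GS Pinv PGP] and I6'' = I6[OF GS Pinv PGP]
  and I7'' = I7[OF GS Pinv PGP] and bip_Q' = bip_Q[OF GS Pinv PGP]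
  and GL1'' = GL1[OF GS Pinv PGP] and GL2'' = GL2[OF GS Pinv PGP] and GTN'' = GTN[OF GS Pinv PGP]
  and POS' = POS[OF GS Pinv PGP] and SIGN' = SIGN[OF GS Pinv PGP] and GNEG' = GNEG[OF GS Pinv PGP]
  and gsym' = gform_sym[OF GS]

lemma part2:
  assumes card: "CARD('n) \<ge> 3" and ht: "gform G t t > 0" and bip: "null_cone_bipreserving G T"
  shows "DP G t (sym_part T) \<or> DP G t (- sym_part T)"
proof -
  obtain c where c1: "T ** ginv G ** transpose T = c *\<^sub>R G" and c2: "transpose T ** ginv G ** T = c *\<^sub>R G"
    using bip_Q'[OF bip] by blast
  define L where "L = ginv G ** transpose T"
  define K where "K = ginv G ** T"
  have gL: "gform G (L *v x) (L *v y) = c * gform G x y" for x y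
    unfolding L_def by (simp only: I3'' c1) (simp add: scaleR_matrix_vector_assoc[symmetric] gform_def)
  have gK: "gform G (K *v x) (K *v y) = c * gform G x y" for x y
    unfolding K_def by (simp only: I5'' c2) (simp add: scaleR_matrix_vector_assoc[symmetric] gform_def)
  have bL: "gform G (L *v u) v = u \<bullet> (T *v v)" for u v unfolding L_def by (rule I6'')
  have bK: "gform G u (K *v v) = u \<bullet> (T *v v)" for u v unfolding K_def by (rule I7'')
  have main: "\<exists>s::real. (s = 1 \<or> s = -1) \<and> (\<forall>u v. future_causal G t u \<and> future_causal G t v \<longrightarrow> 0 \<le> s * (u \<bullet> (T *v v)))"
  proof (cases "c < 0")
    case True
    then show ?thesis using GNEG'[OF card, of L c] gL by blast
  next
    case False
    show ?thesis
    proof (cases "c > 0")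
      case cpos: True
      have "gform G (L *v t) (L *v t) > 0" using gL ht cpos by simp
      then have "L *v t \<noteq> 0" by (auto simp: gform_zero)
      then have dne: "gform G t (L *v t) \<noteq> 0" using GL2''[of "L *v t" t] ht gL cpos by simp
      show ?thesis
      proof (cases "gform G t (L *v t) > 0")
        case True
        have "\<forall>u v. future_causal G t u \<and> future_causal G t v \<longrightarrow> 0 \<le> u \<bullet> (T *v v)"
        proof (intro allI impI)
          fix u v assume uv: "future_causal G t u \<and> future_causal G t v"
          have "\<forall>x y. gform G (L *v x) (L *v y) = c * gform G x y" using gL by blast
          then have "0 \<le> gform G (L *v u) v"
            using POS'[where l="(*v) L", OF cpos _ ht True] uv by blast
          then show "0 \<le> u \<bullet> (T *v v)" using bL by simp
        qed
        then show ?thesis by (intro exI[of _ 1]) auto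
      next
        case False
        then have d: "gform G t (- (L *v t)) > 0" using dne by (simp add: gform_neg)
        have gl': "\<forall>x y. gform G (- (L *v x)) (- (L *v y)) = c * gform G x y" using gL by (simp add: gform_neg)
        have "\<forall>u v. future_causal G t u \<and> future_causal G t v \<longrightarrow> 0 \<le> gform G (- (L *v u)) v"
          using POS'[where l="\<lambda>x. - (L *v x)", OF cpos gl' ht d] by blast
        then have "\<forall>u v. future_causal G t u \<and> future_causal G t v \<longrightarrow> 0 \<le> - (u \<bullet> (T *v v))"
          using bL by (simp add: gform_neg)
        then show ?thesis by (intro exI[of _ "-1"]) auto
      qed
    next
      case False
      then have c0: "c = 0" using \<open>\<not> c < 0\<close> by simp
      define n where "n = L *v t"
      define m where "m = K *v t"
      show ?thesis
      proof (cases "n = 0")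
        case True
        have Kz: "K *v v = 0" for v
        proof (rule ccontr)
          assume ne: "K *v v \<noteq> 0"
          have "gform G (K *v v) (K *v v) = 0" using gK c0 by simp
          then have "gform G t (K *v v) \<noteq> 0" using GL2''[of "K *v v" t] ne ht by simp
          moreover have "gform G t (K *v v) = 0" using bK bL[of t v] True by (simp add: n_def gform_zero)
          ultimately show False by simp
        qed
        have "\<forall>u v. 0 \<le> u \<bullet> (T *v v)" using bK Kz by (simp add: gform_zero)
        then show ?thesis by (intro exI[of _ 1]) auto
      next
        case nne: False
        have nn: "gform G n n = 0" using gL c0 by (simp add: n_def)
        have mm: "gform G m m = 0" using gK c0 by (simp add: m_def)
        define d where "d = gform G n t"
        have dne: "d \<noteq> 0" using GL2''[of n t] nn nne ht gsym'[of n t] by (simp add: d_def)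
        obtain sa where sa: "sa = 1 \<or> sa = -1" "\<forall>u. future_causal G t u \<longrightarrow> 0 \<le> sa * gform G m u"
          using SIGN'[OF mm ht] by blast
        obtain sb where sb: "sb = 1 \<or> sb = -1" "\<forall>u. future_causal G t u \<longrightarrow> 0 \<le> sb * gform G n u"
          using SIGN'[OF nn ht] by blast
        define sd :: real where "sd = (if d > 0 then 1 else -1)"
        have sd: "sd * d > 0" "sd * sd = 1" using dne by (auto simp: sd_def)
        have key: "(u \<bullet> (T *v v)) * d = gform G m u * gform G n v" for u v
        proof -
          have "gform G (L *v u) (L *v u) = 0" using gL c0 by simp
          moreover have "gform G (L *v u) n = 0" using gL c0 by (simp add: n_def)
          ultimately obtain s where s: "L *v u = s *\<^sub>R n" using GTN''[OF _ nn _ nne] by blast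
          have "u \<bullet> (T *v t) = s * d" using bL[of u t] s by (simp add: gform_scale d_def)
          moreover have "u \<bullet> (T *v t) = gform G m u" using bK[of u t] gsym'[of u m] by (simp add: m_def)
          moreover have "u \<bullet> (T *v v) = s * gform G n v" using bL[of u v] s by (simp add: gform_scale)
          ultimately show ?thesis by (simp add: mult_ac)
        qed
        have "\<forall>u v. future_causal G t u \<and> future_causal G t v \<longrightarrow> 0 \<le> (sa * sb * sd) * (u \<bullet> (T *v v))"
          using sign_aux[OF key _ _ sd] sa(2) sb(2) by blast
        moreover have "sa * sb * sd = 1 \<or> sa * sb * sd = -1" using sa(1) sb(1) by (auto simp: sd_def)
        ultimately show ?thesis by blast
      qed
    qed
  qed
  then obtain s :: real where s: "s = 1 \<or> s = -1" and hs: "\<forall>u v. future_causal G t u \<and> future_causal G t v \<longrightarrow> 0 \<le> s * (u \<bullet> (T *v v))"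
    by blast
  show ?thesis
  proof (cases "s = 1")
    case True
    have "DP G t (sym_part T)"
      unfolding DP_def
    proof (intro allI impI)
      fix u v assume "future_causal G t u \<and> future_causal G t v"
      then show "0 \<le> u \<bullet> (sym_part T *v v)" using hs True by (simp add: sym_form)
    qed
    then show ?thesis by blast
  next
    case False
    then have sm: "s = -1" using s by simp
    have "DP G t (- sym_part T)"
      unfolding DP_def
    proof (intro allI impI)
      fix u v assume uv: "future_causal G t u \<and> future_causal G t v"
      have "0 \<le> s * (u \<bullet> (T *v v))" "0 \<le> s * (v \<bullet> (T *v u))" using hs uv by auto
      then show "0 \<le> u \<bullet> ((- sym_part T) *v v)" using sm by (simp add: sym_form uminus_mv)
    qed
    then show ?thesis by blast
  qed
qed

end

theorem mainTheorem12:
  fixes G T :: "real^'n^'n" and tau :: "real^'n"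
  assumes "CARD('n) \<ge> 3"
    and "lorentzian_metric G"
    and "gform G tau tau > 0"
  shows "((\<exists>f::real.
             sym_part T ** ginv G ** transpose (sym_part T)
               + antisym_part T ** ginv G ** transpose (antisym_part T) = f *\<^sub>R G
           \<and> sym_part T ** ginv G ** transpose (antisym_part T)
               + antisym_part T ** ginv G ** transpose (sym_part T) = 0)
          \<longleftrightarrow> null_cone_bipreserving G T)
       \<and> (null_cone_bipreserving G T \<longrightarrow>
            DP G tau (sym_part T) \<or> DP G tau (- sym_part T))"
proof -
  have GS: "transpose G = G" using assms(2) by (simp add: lorentzian_metric_def)
  obtain P :: "real^'n^'n" and i0 where Pinv: "invertible P"
    and PGP0: "transpose P ** G ** P = (\<chi> i j. if i = j then (if i = i0 then 1 else -1) else 0)"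
    using assms(2) unfolding lorentzian_metric_def by blast
  have PGP: "transpose P ** G ** P = eta i0" using PGP0 by (simp add: eta_def)
  show ?thesis
    using part1[OF GS Pinv PGP, of T] part2[OF GS Pinv PGP assms(1) assms(3)] by blast
qed

end
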